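(* In a graph $G$ with $\mu_\alpha(G)\leq 1$, every internal vertex is adjacent to at most two leaves.
   Context: All graphs are finite and simple. For a graph $H$, $\alpha(H)$ is the maximum size of an independent set, $i(H)$ the minimum size of an inclusion-maximal independent set, and $\mu_\alpha(H)=\alpha(H)-i(H)$. Let $U$ be the set of vertices of $G$ whose connected component is a complete graph. In $G-U$, vertices of degree $1$ are called leaves and the others are called internal vertices. *)

theory Defs
  imports Main
begin

definition simple_graph :: "'a set \<Rightarrow> ('a \<Rightarrow> 'a \<Rightarrow> bool) \<Rightarrow> bool" where
  "simple_graph V E \<longleftrightarrow> finite V \<and> (\<forall>x y. E x y \<longrightarrow> x \<in> V \<and> y \<in> V)
     \<and> (\<forall>x y. E x y \<longrightarrow> E y x) \<and> (\<forall>x. \<not> E x x)"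

definition independent_set :: "'a set \<Rightarrow> ('a \<Rightarrow> 'a \<Rightarrow> bool) \<Rightarrow> 'a set \<Rightarrow> bool" where
  "independent_set V E S \<longleftrightarrow> S \<subseteq> V \<and> (\<forall>x\<in>S. \<forall>y\<in>S. \<not> E x y)"

definition maximal_independent_set :: "'a set \<Rightarrow> ('a \<Rightarrow> 'a \<Rightarrow> bool) \<Rightarrow> 'a set \<Rightarrow> bool" where
  "maximal_independent_set V E S \<longleftrightarrow> independent_set V E S \<and>
     (\<forall>T. independent_set V E T \<longrightarrow> S \<subseteq> T \<longrightarrow> T = S)"

definition alpha :: "'a set \<Rightarrow> ('a \<Rightarrow> 'a \<Rightarrow> bool) \<Rightarrow> nat" where
  "alpha V E = Max (card ` {S. independent_set V E S})"

definition indep_dom :: "'a set \<Rightarrow> ('a \<Rightarrow> 'a \<Rightarrow> bool) \<Rightarrow> nat" where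
  "indep_dom V E = Min (card ` {S. maximal_independent_set V E S})"

definition mu_alpha :: "'a set \<Rightarrow> ('a \<Rightarrow> 'a \<Rightarrow> bool) \<Rightarrow> nat" where
  "mu_alpha V E = alpha V E - indep_dom V E"

definition component :: "'a set \<Rightarrow> ('a \<Rightarrow> 'a \<Rightarrow> bool) \<Rightarrow> 'a \<Rightarrow> 'a set" where
  "component V E v = {w \<in> V. (\<lambda>x y. x \<in> V \<and> y \<in> V \<and> E x y)\<^sup>*\<^sup>* v w}"

definition is_complete_on :: "('a \<Rightarrow> 'a \<Rightarrow> bool) \<Rightarrow> 'a set \<Rightarrow> bool" where
  "is_complete_on E C \<longleftrightarrow> (\<forall>x\<in>C. \<forall>y\<in>C. x \<noteq> y \<longrightarrow> E x y)"

definition U_set :: "'a set \<Rightarrow> ('a \<Rightarrow> 'a \<Rightarrow> bool) \<Rightarrow> 'a set" where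
  "U_set V E = {v \<in> V. is_complete_on E (component V E v)}"

definition deg_GU :: "'a set \<Rightarrow> ('a \<Rightarrow> 'a \<Rightarrow> bool) \<Rightarrow> 'a \<Rightarrow> nat" where
  "deg_GU V E v = card {w \<in> V - U_set V E. E v w}"

definition leaf :: "'a set \<Rightarrow> ('a \<Rightarrow> 'a \<Rightarrow> bool) \<Rightarrow> 'a \<Rightarrow> bool" where
  "leaf V E v \<longleftrightarrow> v \<in> V - U_set V E \<and> deg_GU V E v = 1"

definition internal :: "'a set \<Rightarrow> ('a \<Rightarrow> 'a \<Rightarrow> bool) \<Rightarrow> 'a \<Rightarrow> bool" where
  "internal V E v \<longleftrightarrow> v \<in> V - U_set V E \<and> deg_GU V E v \<noteq> 1"

end

theory Submission
  imports Defs
begin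

lemma nbr_notU:
  assumes g: "simple_graph V E" and w: "w \<in> V - U_set V E" and e: "E w u"
  shows "u \<in> V - U_set V E"
proof -
  let ?R = "\<lambda>x y. x \<in> V \<and> y \<in> V \<and> E x y"
  have uV: "u \<in> V" and wV: "w \<in> V" using g e unfolding simple_graph_def by blast+
  have euw: "E u w" using g e unfolding simple_graph_def by blast
  have sub: "component V E w \<subseteq> component V E u"
  proof
    fix x assume "x \<in> component V E w"
    then have "x \<in> V" "?R\<^sup>*\<^sup>* w x" unfolding component_def by auto
    moreover have "?R\<^sup>*\<^sup>* u w" using uV wV euw by (intro r_into_rtranclp) auto
    ultimately show "x \<in> component V E u" unfolding component_def
      by (auto intro: rtranclp_trans)
  qed
  show ?thesis
  proof (rule ccontr)
    assume "u \<notin> V - U_set V E"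
    then have "is_complete_on E (component V E u)" using uV unfolding U_set_def by auto
    then have "is_complete_on E (component V E w)" using sub unfolding is_complete_on_def by blast
    then show False using w wV unfolding U_set_def by auto
  qed
qed

lemma leaf_nbr:
  assumes g: "simple_graph V E" and l: "leaf V E w" and ev: "E v w" and eu: "E w u"
  shows "u = v"
proof -
  have evw: "E w v" using g ev unfolding simple_graph_def by blast
  have wn: "w \<in> V - U_set V E" and c: "card {x \<in> V - U_set V E. E w x} = 1"
    using l unfolding leaf_def deg_GU_def by auto
  have "v \<in> {x \<in> V - U_set V E. E w x}" using nbr_notU[OF g wn evw] evw by auto
  moreover have "u \<in> {x \<in> V - U_set V E. E w x}" using nbr_notU[OF g wn eu] eu by auto
  ultimately show ?thesis using c by (metis card_1_singletonE singletonD)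
qed

theorem corollary6:
  fixes V :: "'a set" and E :: "'a \<Rightarrow> 'a \<Rightarrow> bool" and v :: 'a
  assumes "simple_graph V E"
    and "mu_alpha V E \<le> 1"
    and "internal V E v"
  shows "card {w. leaf V E w \<and> E v w} \<le> 2"
proof (rule ccontr)
  assume ncard: "\<not> ?thesis"
  have g: "simple_graph V E" by fact
  have fin: "finite V" using g unfolding simple_graph_def by blast
  have vV: "v \<in> V" using assms(3) unfolding internal_def by auto
  have sym: "\<And>x y. E x y \<Longrightarrow> E y x" and irr: "\<And>x. \<not> E x x"
    and inV: "\<And>x y. E x y \<Longrightarrow> x \<in> V \<and> y \<in> V"
    using g unfolding simple_graph_def by blast+
  let ?L = "{w. leaf V E w \<and> E v w}"
  have LV: "?L \<subseteq> V" using inV by auto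
  have finL: "finite ?L" using LV fin finite_subset by blast
  let ?C = "{S. independent_set V E S \<and> v \<in> S}"
  have finC: "finite ?C" using fin unfolding independent_set_def
    by (rule finite_subset[rotated, OF finite_Collect_subsets]) auto
  have "{v} \<in> ?C" using vV irr unfolding independent_set_def by auto
  then have neC: "?C \<noteq> {}" by blast
  obtain S where SC: "S \<in> ?C" and Smax: "\<And>T. T \<in> ?C \<Longrightarrow> card T \<le> card S"
  proof -
    have "\<forall>y. y \<in> ?C \<longrightarrow> card y < Suc (card V)"
      using fin unfolding independent_set_def by (auto simp: less_Suc_eq_le intro: card_mono)
    then show ?thesis using ex_has_greatest_nat[of "\<lambda>S. S \<in> ?C" "{v}" card "Suc (card V)"]
      \<open>{v} \<in> ?C\<close> that by blast
  qed
  have Sind: "independent_set V E S" and vS: "v \<in> S" using SC by auto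
  have finS: "finite S" using Sind fin unfolding independent_set_def by (auto intro: finite_subset)
  have Smaxi: "maximal_independent_set V E S"
    unfolding maximal_independent_set_def
  proof (intro conjI allI impI)
    fix T assume T: "independent_set V E T" "S \<subseteq> T"
    then have "T \<in> ?C" using vS by auto
    then have "card T \<le> card S" by (rule Smax)
    moreover have "finite T" using T fin unfolding independent_set_def by (auto intro: finite_subset)
    ultimately show "T = S" using T(2) by (metis card_seteq)
  qed (rule Sind)
  have finM: "finite {S. maximal_independent_set V E S}" using fin
    unfolding maximal_independent_set_def independent_set_def
    by (rule finite_subset[rotated, OF finite_Collect_subsets]) auto
  have id_le: "indep_dom V E \<le> card S" unfolding indep_dom_def
    using finM Smaxi by (auto intro: Min_le)
  define T where "T = (S - {v}) \<union> ?L"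
  have LS: "?L \<inter> S = {}"
  proof -
    { fix w assume "w \<in> ?L" "w \<in> S"
      then have False using Sind vS unfolding independent_set_def by blast }
    then show ?thesis by blast
  qed
  have vL: "v \<notin> ?L" using irr by auto
  have Tind: "independent_set V E T"
    unfolding independent_set_def
  proof (intro conjI ballI)
    show "T \<subseteq> V" using Sind LV unfolding T_def independent_set_def by auto
  next
    fix x y assume x: "x \<in> T" and y: "y \<in> T"
    show "\<not> E x y"
    proof
      assume exy: "E x y"
      show False
      proof (cases "x \<in> ?L")
        case True
        then have "y = v" using leaf_nbr[OF g _ _ exy] by auto
        then show False using y vL unfolding T_def by auto
      next
        case False
        then have xS: "x \<in> S - {v}" using x unfolding T_def by auto
        show False
        proof (cases "y \<in> ?L")
          case True
          then have "x = v" using leaf_nbr[OF g _ _ sym[OF exy]] by auto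
          then show False using xS by auto
        next
          case False
          then have "y \<in> S" using y unfolding T_def by auto
          then show False using xS exy Sind unfolding independent_set_def by auto
        qed
      qed
    qed
  qed
  have cardT: "card T = card S - 1 + card ?L"
  proof -
    have "card T = card (S - {v}) + card ?L" unfolding T_def
      using finS finL LS by (subst card_Un_disjoint) auto
    then show ?thesis using vS finS by simp
  qed
  have finI: "finite (card ` {S. independent_set V E S})" using fin
    unfolding independent_set_def
    by (rule finite_subset[rotated, OF finite_Collect_subsets, THEN finite_imageI]) auto
  have "card T \<le> alpha V E" unfolding alpha_def using finI Tind by (auto intro: Max_ge)
  moreover have "card S \<ge> 1" using vS finS by (metis One_nat_def Suc_leI card_gt_0_iff empty_iff)
  ultimately have "mu_alpha V E \<ge> 2" using id_le cardT ncard unfolding mu_alpha_def by linarith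
  then show False using assms(2) by simp
qed

end
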